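(* Let $V$ be a poset, $m$ a maximal node of $V$ of positive height, and let $U$ be a splitting of $V$ at $m$ with splitting map $\varphi$. Then $\dim U=\dim V$ and $\varphi(\min U)=\min V$.
   Context: $\dim$ of a poset is the supremum of lengths of chains; the height of a node $u$ is the dimension of $\{v: v\le u\}$. A poset map is an order-preserving map. Given a poset $V$ with a maximal node $m$ of positive height, a poset $U$ is a splitting of $V$ at $m$ if there exist a finite nonempty set $\mathcal M\subseteq\max U$ of nodes of positive height and a surjective poset map $\varphi:U\to V$ (called a splitting map) such that: (1) $\varphi^{-1}(m)=\mathcal M$ and $|\varphi^{-1}(v)|=1$ for all $v\neq m$; (2) whenever $\varphi(x')=x\le y$ with $x'\in U$, $x,y\in V$, there exists $y'\in U$ with $x'\le y'$ and $\varphi(y')=y$. *)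

theory Defs
  imports Main "HOL-Library.Extended_Nat"
begin

text \<open>Posets are modelled as types of class order (the poset is the whole type).\<close>

definition dim_on :: "'a::order set \<Rightarrow> enat" where
  "dim_on S = Sup {enat (card C - 1) | C. C \<subseteq> S \<and> finite C \<and> C \<noteq> {} \<and>
                     Complete_Partial_Order.chain (\<le>) C}"

abbreviation dim :: "'a::order itself \<Rightarrow> enat" where
  "dim _ \<equiv> dim_on (UNIV :: 'a set)"

definition height :: "'a::order \<Rightarrow> enat" where
  "height u = dim_on {v. v \<le> u}"

definition max_nodes :: "'a::order set" where
  "max_nodes = {u. \<forall>y. u \<le> y \<longrightarrow> y = u}"

definition min_nodes :: "'a::order set" where
  "min_nodes = {u. \<forall>y. y \<le> u \<longrightarrow> y = u}"

definition splitting_map :: "('u::order \<Rightarrow> 'v::order) \<Rightarrow> 'v \<Rightarrow> bool" where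
  "splitting_map \<phi> m \<longleftrightarrow>
     (\<exists>M. finite M \<and> M \<noteq> {} \<and> M \<subseteq> max_nodes \<and> (\<forall>x\<in>M. height x > 0) \<and>
          mono \<phi> \<and> surj \<phi> \<and>
          \<phi> -` {m} = M \<and>
          (\<forall>v. v \<noteq> m \<longrightarrow> card (\<phi> -` {v}) = 1) \<and>
          (\<forall>x' y. \<phi> x' \<le> y \<longrightarrow> (\<exists>y'. x' \<le> y' \<and> \<phi> y' = y)))"

end

theory Submission
  imports Defs
begin

lemma chain_has_max:
  fixes C :: "'a::order set"
  assumes "finite C" "C \<noteq> {}" "Complete_Partial_Order.chain (\<le>) C"
  shows "\<exists>c\<in>C. \<forall>x\<in>C. x \<le> c"
  using assms
proof (induction C rule: finite_ne_induct)
  case (singleton x) then show ?case by simp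
next
  case (insert x F)
  have "Complete_Partial_Order.chain (\<le>) F" using insert.prems by (auto simp: chain_def)
  then obtain c where c: "c \<in> F" "\<forall>y\<in>F. y \<le> c" using insert.IH by blast
  have "x \<le> c \<or> c \<le> x" using insert.prems c(1) by (auto simp: chain_def)
  then show ?case using c by (auto intro: order_trans)
qed

lemma chain_lift:
  fixes \<phi> :: "'u::order \<Rightarrow> 'v::order"
  assumes surj: "surj \<phi>" and mono: "mono \<phi>"
    and inj: "\<And>a b. a \<le> b \<Longrightarrow> \<phi> a = \<phi> b \<Longrightarrow> a = b"
    and lift: "\<And>x' y. \<phi> x' \<le> y \<Longrightarrow> \<exists>y'. x' \<le> y' \<and> \<phi> y' = y"
  shows "\<forall>C. finite C \<and> card C = Suc n \<and> Complete_Partial_Order.chain (\<le>) C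
      \<longrightarrow> (\<exists>D. finite D \<and> card D = Suc n \<and> Complete_Partial_Order.chain (\<le>) D \<and> \<phi> ` D = C)"
proof (induction n)
  case 0
  show ?case
  proof (intro allI impI)
    fix C :: "'v set" assume "finite C \<and> card C = Suc 0 \<and> Complete_Partial_Order.chain (\<le>) C"
    then obtain c where c: "C = {c}" using card_1_singletonE by auto
    obtain u where "\<phi> u = c" using surj by (metis surjD)
    then show "\<exists>D. finite D \<and> card D = Suc 0 \<and> Complete_Partial_Order.chain (\<le>) D \<and> \<phi> ` D = C"
      using c by (intro exI[of _ "{u}"]) (auto simp: chain_def)
  qed
next
  case (Suc n)
  show ?case
  proof (intro allI impI)
    fix C :: "'v set" assume H: "finite C \<and> card C = Suc (Suc n) \<and> Complete_Partial_Order.chain (\<le>) C"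
    have fC: "finite C" and cC: "card C = Suc (Suc n)" and chC: "Complete_Partial_Order.chain (\<le>) C"
      using H by auto
    have ne: "C \<noteq> {}" using cC by auto
    obtain c where cin: "c \<in> C" and cmax: "\<And>x. x \<in> C \<Longrightarrow> x \<le> c"
      using chain_has_max[OF fC ne chC] by blast
    define C' where "C' = C - {c}"
    have fC': "finite C'" "card C' = Suc n" using fC cC cin C'_def by auto
    have chC': "Complete_Partial_Order.chain (\<le>) C'" using chC C'_def
      by (auto simp: chain_def)
    obtain D' where D': "finite D'" "card D' = Suc n" "Complete_Partial_Order.chain (\<le>) D'" "\<phi> ` D' = C'"
      using Suc.IH fC' chC' by blast
    have ne': "C' \<noteq> {}" using fC' by auto
    obtain c' where c'in: "c' \<in> C'" and c'max: "\<And>x. x \<in> C' \<Longrightarrow> x \<le> c'"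
      using chain_has_max[OF fC'(1) ne' chC'] by blast
    obtain d where d: "d \<in> D'" "\<phi> d = c'" using c'in D'(4) by auto
    have dtop: "\<And>e. e \<in> D' \<Longrightarrow> e \<le> d"
    proof -
      fix e assume e: "e \<in> D'"
      have "e \<le> d \<or> d \<le> e" using D'(3) e d(1) by (auto simp: chain_def)
      moreover have "d \<le> e \<Longrightarrow> e = d"
      proof -
        assume de: "d \<le> e"
        have "\<phi> e \<in> C'" using e D'(4) by auto
        then have "\<phi> e \<le> c'" using c'max by simp
        moreover have "\<phi> d \<le> \<phi> e" using mono de by (simp add: monoD)
        ultimately have "\<phi> d = \<phi> e" using d by simp
        then show "e = d" using inj[OF de] by simp
      qed
      ultimately show "e \<le> d" by auto
    qed
    have "c' \<le> c" using cmax c'in C'_def by auto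
    then obtain y where y: "d \<le> y" "\<phi> y = c" using lift d by metis
    have ynot: "y \<notin> D'" using y D'(4) C'_def by auto
    show "\<exists>D. finite D \<and> card D = Suc (Suc n) \<and> Complete_Partial_Order.chain (\<le>) D \<and> \<phi> ` D = C"
    proof (intro exI[of _ "insert y D'"] conjI)
      show "finite (insert y D')" using D' by simp
      show "card (insert y D') = Suc (Suc n)" using D' ynot by simp
      show "Complete_Partial_Order.chain (\<le>) (insert y D')"
        using D'(3) dtop y(1) by (auto simp: chain_def intro: order_trans)
      show "\<phi> ` insert y D' = C" using D'(4) y(2) C'_def cin by auto
    qed
  qed
qed

lemma height_pos_below:
  fixes u :: "'a::order"
  assumes "height u > 0"
  shows "\<exists>w. w < u"
proof (rule ccontr)
  assume "\<not> (\<exists>w. w < u)"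
  then have S: "{v. v \<le> u} = {u}" using order.not_eq_order_implies_strict by auto
  have "\<And>C. C \<subseteq> {u} \<Longrightarrow> card C - 1 = 0"
  proof -
    fix C :: "'a set" assume "C \<subseteq> {u}"
    then have "card C \<le> card {u}" by (intro card_mono) auto
    then show "card C - 1 = 0" by simp
  qed
  then have "{enat (card C - 1) | C. C \<subseteq> {v. v \<le> u} \<and> finite C \<and> C \<noteq> {} \<and>
                     Complete_Partial_Order.chain (\<le>) C} \<subseteq> {0}"
    using S by (auto simp: zero_enat_def)
  then have "height u \<le> 0" unfolding height_def dim_on_def
    by (intro Sup_least) auto
  then show False using assms by simp
qed

theorem lemma4p4:
  fixes \<phi> :: "'u::order \<Rightarrow> 'v::order" and m :: 'v
  assumes "m \<in> max_nodes" and "height m > 0"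
    and "splitting_map \<phi> m"
  shows "dim TYPE('u) = dim TYPE('v) \<and> \<phi> ` min_nodes = min_nodes"
proof -
  obtain M where M: "finite M" "M \<noteq> {}" "M \<subseteq> max_nodes" "\<forall>x\<in>M. height x > 0"
    "mono \<phi>" "surj \<phi>" "\<phi> -` {m} = M" "\<forall>v. v \<noteq> m \<longrightarrow> card (\<phi> -` {v}) = 1"
    "\<forall>x' y. \<phi> x' \<le> y \<longrightarrow> (\<exists>y'. x' \<le> y' \<and> \<phi> y' = y)"
    using assms(3) unfolding splitting_map_def by blast
  have uniq: "\<And>a b. \<phi> a \<noteq> m \<Longrightarrow> \<phi> a = \<phi> b \<Longrightarrow> a = b"
  proof -
    fix a b assume h: "\<phi> a \<noteq> m" "\<phi> a = \<phi> b"
    have "card (\<phi> -` {\<phi> a}) = 1" using M(8) h(1) by blast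
    then obtain z where "\<phi> -` {\<phi> a} = {z}" using card_1_singletonE by blast
    then show "a = b" using h(2) by (metis singletonD vimage_singleton_eq)
  qed
  have inj: "\<And>a b. a \<le> b \<Longrightarrow> \<phi> a = \<phi> b \<Longrightarrow> a = b"
  proof -
    fix a b :: 'u assume h: "a \<le> b" "\<phi> a = \<phi> b"
    show "a = b"
    proof (cases "\<phi> a = m")
      case True
      then have "a \<in> max_nodes" using M(7) M(3) by auto
      then show ?thesis using h(1) unfolding max_nodes_def by auto
    next
      case False
      then show ?thesis using uniq h(2) by blast
    qed
  qed
  have chU: "\<And>D. finite D \<Longrightarrow> D \<noteq> {} \<Longrightarrow> Complete_Partial_Order.chain (\<le>) D \<Longrightarrow>
      finite (\<phi> ` D) \<and> \<phi> ` D \<noteq> {} \<and> Complete_Partial_Order.chain (\<le>) (\<phi> ` D) \<and> card (\<phi> ` D) = card D"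
  proof -
    fix D :: "'u set" assume D: "finite D" "D \<noteq> {}" "Complete_Partial_Order.chain (\<le>) D"
    have "inj_on \<phi> D"
    proof (rule inj_onI)
      fix a b assume ab: "a \<in> D" "b \<in> D" "\<phi> a = \<phi> b"
      then have "a \<le> b \<or> b \<le> a" using D(3) by (auto simp: chain_def)
      then show "a = b" using inj ab(3) by metis
    qed
    moreover have "Complete_Partial_Order.chain (\<le>) (\<phi> ` D)"
      unfolding chain_def
    proof (intro ballI)
      fix x y assume "x \<in> \<phi> ` D" "y \<in> \<phi> ` D"
      then obtain a b where "a \<in> D" "b \<in> D" "x = \<phi> a" "y = \<phi> b" by blast
      then show "x \<le> y \<or> y \<le> x" using D(3) M(5) unfolding chain_def by (meson monoD)
    qed
    ultimately show "finite (\<phi> ` D) \<and> \<phi> ` D \<noteq> {} \<and> Complete_Partial_Order.chain (\<le>) (\<phi> ` D) \<and> card (\<phi> ` D) = card D"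
      using D by (simp add: card_image)
  qed
  have liftC: "\<And>C. finite C \<Longrightarrow> C \<noteq> {} \<Longrightarrow> Complete_Partial_Order.chain (\<le>) C \<Longrightarrow>
      \<exists>D. finite D \<and> card D = card C \<and> Complete_Partial_Order.chain (\<le>) D \<and> \<phi> ` D = C"
  proof -
    fix C :: "'v set" assume C: "finite C" "C \<noteq> {}" "Complete_Partial_Order.chain (\<le>) C"
    then obtain n where n: "card C = Suc n" by (metis card_0_eq not0_implies_Suc)
    show "\<exists>D. finite D \<and> card D = card C \<and> Complete_Partial_Order.chain (\<le>) D \<and> \<phi> ` D = C"
      using chain_lift[OF M(6) M(5) inj, of n] M(9) C n by metis
  qed
  have setsEq: "{enat (card C - 1) | C. C \<subseteq> (UNIV::'u set) \<and> finite C \<and> C \<noteq> {} \<and>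
                     Complete_Partial_Order.chain (\<le>) C} =
      {enat (card C - 1) | C. C \<subseteq> (UNIV::'v set) \<and> finite C \<and> C \<noteq> {} \<and>
                     Complete_Partial_Order.chain (\<le>) C}"
  proof (intro equalityI subsetI)
    fix x assume "x \<in> {enat (card C - 1) | C. C \<subseteq> (UNIV::'u set) \<and> finite C \<and> C \<noteq> {} \<and>
                     Complete_Partial_Order.chain (\<le>) C}"
    then obtain D :: "'u set" where D: "x = enat (card D - 1)" "finite D" "D \<noteq> {}" "Complete_Partial_Order.chain (\<le>) D"
      by blast
    show "x \<in> {enat (card C - 1) | C. C \<subseteq> (UNIV::'v set) \<and> finite C \<and> C \<noteq> {} \<and>
                     Complete_Partial_Order.chain (\<le>) C}"
      using chU[OF D(2-4)] D(1) by (intro CollectI exI[of _ "\<phi> ` D"]) auto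
  next
    fix x assume "x \<in> {enat (card C - 1) | C. C \<subseteq> (UNIV::'v set) \<and> finite C \<and> C \<noteq> {} \<and>
                     Complete_Partial_Order.chain (\<le>) C}"
    then obtain C :: "'v set" where C: "x = enat (card C - 1)" "finite C" "C \<noteq> {}" "Complete_Partial_Order.chain (\<le>) C"
      by blast
    obtain D where D: "finite D" "card D = card C" "Complete_Partial_Order.chain (\<le>) D" "\<phi> ` D = C"
      using liftC[OF C(2-4)] by blast
    show "x \<in> {enat (card C - 1) | C. C \<subseteq> (UNIV::'u set) \<and> finite C \<and> C \<noteq> {} \<and>
                     Complete_Partial_Order.chain (\<le>) C}"
      using D C by (intro CollectI exI[of _ D]) auto
  qed
  have dimEq: "dim TYPE('u) = dim TYPE('v)" unfolding dim_on_def using setsEq by simp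
  have minEq: "\<phi> ` min_nodes = min_nodes"
  proof (intro equalityI subsetI)
    fix v assume "v \<in> \<phi> ` min_nodes"
    then obtain u where u: "u \<in> min_nodes" "v = \<phi> u" by blast
    have umin: "\<And>w. w \<le> u \<Longrightarrow> w = u" using u(1) unfolding min_nodes_def by auto
    have "\<phi> u \<noteq> m"
    proof
      assume "\<phi> u = m"
      then have "u \<in> M" using M(7) by auto
      then obtain w where "w < u" using height_pos_below M(4) by blast
      then show False using umin[of w] by (simp add: order_less_imp_le)
    qed
    have "\<forall>y. y \<le> v \<longrightarrow> y = v"
    proof (intro allI impI)
      fix y assume yv: "y \<le> v"
      obtain w where w: "\<phi> w = y" using M(6) by (metis surjD)
      obtain y' where y': "w \<le> y'" "\<phi> y' = v" using M(9) w yv by blast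
      have "y' = u" using uniq \<open>\<phi> u \<noteq> m\<close> y'(2) u(2) by metis
      then have "w = u" using umin y'(1) by simp
      then show "y = v" using w u(2) by simp
    qed
    then show "v \<in> min_nodes" unfolding min_nodes_def by simp
  next
    fix v :: 'v assume vmin: "v \<in> min_nodes"
    have "v \<noteq> m"
    proof
      assume "v = m"
      then obtain w where "w < m" using height_pos_below assms(2) by blast
      then show False using vmin \<open>v = m\<close> unfolding min_nodes_def by (auto dest: order_less_imp_le)
    qed
    obtain u where u: "\<phi> u = v" using M(6) by (metis surjD)
    have "u \<in> min_nodes"
      unfolding min_nodes_def
    proof (intro CollectI allI impI)
      fix w assume wu: "w \<le> u"
      have "\<phi> w \<le> v" using M(5) wu u by (metis monoD)
      then have "\<phi> w = v" using vmin unfolding min_nodes_def by auto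
      then show "w = u" using uniq \<open>v \<noteq> m\<close> u by metis
    qed
    then show "v \<in> \<phi> ` min_nodes" using u by blast
  qed
  show ?thesis using dimEq minEq by simp
qed

end
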